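(* Let $\Omega\subset\mathbb{R}^n$ be a bounded open set. Any viscosity solution $u$ of $\Delta_\infty u-|Du|^2=0$ in $\Omega$ is a viscosity supersolution of $\frac{\Delta_\infty u}{|Du|^2}=1$ in $\Omega$.
   Context: $\Delta_\infty u=\sum_{i,j=1}^n u_{x_i}u_{x_j}u_{x_ix_j}$. Viscosity solution of $\Delta_\infty u-|Du|^2=0$: $u$ continuous, and whenever $\phi\in C^2$ and $u-\phi$ has a local maximum (resp. minimum) at $x$, $\Delta_\infty\phi(x)-|D\phi(x)|^2\ge0$ (resp. $\le0$). Viscosity supersolution of $\frac{\Delta_\infty u}{|Du|^2}=1$: whenever $\phi\in C^2(\Omega)$ and $u-\phi$ has a local minimum at $x\in\Omega$, then $\frac{\Delta_\infty\phi(x)}{|D\phi(x)|^2}\le1$ if $D\phi(x)\ne0$, and $\min_{|p|=1}p\cdot D^2\phi(x)\,p\le1$ if $D\phi(x)=0$. *)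

theory Defs
  imports "HOL-Analysis.Analysis"
begin

definition grad :: "(real^'n \<Rightarrow> real) \<Rightarrow> real^'n \<Rightarrow> real^'n" where
  "grad \<phi> x = (\<chi> i. frechet_derivative \<phi> (at x) (axis i 1))"

definition hess :: "(real^'n \<Rightarrow> real) \<Rightarrow> real^'n \<Rightarrow> real^'n^'n" where
  "hess \<phi> x = (\<chi> i j. frechet_derivative (\<lambda>y. grad \<phi> y $ i) (at x) (axis j 1))"

definition C2_on :: "(real^'n \<Rightarrow> real) \<Rightarrow> (real^'n) set \<Rightarrow> bool" where
  "C2_on \<phi> \<Omega> \<longleftrightarrow>
     (\<forall>x\<in>\<Omega>. \<phi> differentiable (at x)) \<and>
     (\<forall>x\<in>\<Omega>. \<forall>i. (\<lambda>y. grad \<phi> y $ i) differentiable (at x)) \<and>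
     continuous_on \<Omega> (hess \<phi>)"

definition inf_lap :: "(real^'n \<Rightarrow> real) \<Rightarrow> real^'n \<Rightarrow> real" where
  "inf_lap \<phi> x = (\<Sum>i\<in>UNIV. \<Sum>j\<in>UNIV. grad \<phi> x $ i * grad \<phi> x $ j * hess \<phi> x $ i $ j)"

definition local_max_at :: "(real^'n \<Rightarrow> real) \<Rightarrow> (real^'n) set \<Rightarrow> real^'n \<Rightarrow> bool" where
  "local_max_at f \<Omega> x \<longleftrightarrow> x \<in> \<Omega> \<and> (\<exists>e>0. \<forall>y\<in>ball x e \<inter> \<Omega>. f y \<le> f x)"

definition local_min_at :: "(real^'n \<Rightarrow> real) \<Rightarrow> (real^'n) set \<Rightarrow> real^'n \<Rightarrow> bool" where
  "local_min_at f \<Omega> x \<longleftrightarrow> x \<in> \<Omega> \<and> (\<exists>e>0. \<forall>y\<in>ball x e \<inter> \<Omega>. f x \<le> f y)"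

definition visc_sol :: "(real^'n \<Rightarrow> real) \<Rightarrow> (real^'n) set \<Rightarrow> bool" where
  "visc_sol u \<Omega> \<longleftrightarrow> continuous_on \<Omega> u \<and>
     (\<forall>\<phi> x. C2_on \<phi> \<Omega> \<longrightarrow> local_max_at (\<lambda>y. u y - \<phi> y) \<Omega> x \<longrightarrow>
        inf_lap \<phi> x - (norm (grad \<phi> x))\<^sup>2 \<ge> 0) \<and>
     (\<forall>\<phi> x. C2_on \<phi> \<Omega> \<longrightarrow> local_min_at (\<lambda>y. u y - \<phi> y) \<Omega> x \<longrightarrow>
        inf_lap \<phi> x - (norm (grad \<phi> x))\<^sup>2 \<le> 0)"

definition visc_supersol_norm :: "(real^'n \<Rightarrow> real) \<Rightarrow> (real^'n) set \<Rightarrow> bool" where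
  "visc_supersol_norm u \<Omega> \<longleftrightarrow>
     (\<forall>\<phi> x. C2_on \<phi> \<Omega> \<longrightarrow> local_min_at (\<lambda>y. u y - \<phi> y) \<Omega> x \<longrightarrow>
        (if grad \<phi> x \<noteq> 0 then inf_lap \<phi> x / (norm (grad \<phi> x))\<^sup>2 \<le> 1
         else Inf {p \<bullet> (hess \<phi> x *v p) | p. norm p = 1} \<le> 1))"

end

theory Submission
  imports Defs
begin

lemma lin_expand:
  fixes f :: "real^'n \<Rightarrow> real"
  assumes "linear f"
  shows "f v = (\<chi> i. f (axis i 1)) \<bullet> v"
proof -
  have "f v = f (\<Sum>i\<in>UNIV. v$i *s axis i 1)" by (simp add: basis_expansion)
  also have "\<dots> = (\<Sum>i\<in>UNIV. v$i * f (axis i 1))"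
    using assms by (simp add: linear_sum linear_scale scalar_mult_eq_scaleR)
  finally show ?thesis by (simp add: inner_vec_def mult.commute)
qed

lemma grad_deriv:
  assumes "\<phi> differentiable (at y)"
  shows "(\<phi> has_derivative (\<lambda>v. grad \<phi> y \<bullet> v)) (at y)"
proof -
  have d: "(\<phi> has_derivative frechet_derivative \<phi> (at y)) (at y)"
    using assms frechet_derivative_works by blast
  have lin: "linear (frechet_derivative \<phi> (at y))"
    using d has_derivative_linear by blast
  then have "frechet_derivative \<phi> (at y) = (\<lambda>v. grad \<phi> y \<bullet> v)"
    by (intro ext, subst lin_expand[OF lin]) (simp add: grad_def)
  with d show ?thesis by simp
qed

lemma grad_hess_deriv:
  assumes "\<And>i. (\<lambda>y. grad \<phi> y $ i) differentiable (at x)"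
  shows "(grad \<phi> has_derivative (\<lambda>v. hess \<phi> x *v v)) (at x)"
proof -
  have "((\<lambda>y. grad \<phi> y \<bullet> b) has_derivative (\<lambda>v. (hess \<phi> x *v v) \<bullet> b)) (at x)"
    if "b \<in> Basis" for b
  proof -
    from that obtain i where b: "b = axis i 1" by (auto simp: Basis_vec_def)
    have d: "((\<lambda>y. grad \<phi> y $ i) has_derivative frechet_derivative (\<lambda>y. grad \<phi> y $ i) (at x)) (at x)"
      using assms[of i] frechet_derivative_works by blast
    have lin: "linear (frechet_derivative (\<lambda>y. grad \<phi> y $ i) (at x))"
      using d has_derivative_linear by blast
    then have "frechet_derivative (\<lambda>y. grad \<phi> y $ i) (at x) = (\<lambda>v. (hess \<phi> x *v v) $ i)"
      by (intro ext, subst lin_expand[OF lin]) (simp add: hess_def matrix_vector_mult_def inner_vec_def mult.commute)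
    with d show ?thesis unfolding b cart_eq_inner_axis[symmetric] by simp
  qed
  then show ?thesis by (subst has_derivative_componentwise_within[where S=UNIV, simplified]) blast
qed

definition quad :: "real \<Rightarrow> real^'n \<Rightarrow> real^'n \<Rightarrow> real" where
  "quad c z y = c / 2 * ((y - z) \<bullet> (y - z))"

lemma quad_grad: "grad (quad c z) y = c *\<^sub>R (y - z)"
proof -
  have "(quad c z has_derivative (\<lambda>v. c / 2 * (v \<bullet> (y - z) + (y - z) \<bullet> v))) (at y)"
    unfolding quad_def by (auto intro!: derivative_eq_intros)
  then have "frechet_derivative (quad c z) (at y) = (\<lambda>v. c / 2 * (v \<bullet> (y - z) + (y - z) \<bullet> v))"
    using frechet_derivative_at by metis
  then show ?thesis
    by (simp add: grad_def vec_eq_iff inner_axis' inner_commute)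
qed

lemma quad_comp: "(\<lambda>y. grad (quad c z) y $ i) = (\<lambda>y. c * ((y - z) \<bullet> axis i 1))"
  by (simp add: quad_grad inner_axis)

lemma quad_hess: "hess (quad c z) y = mat c"
proof -
  have "((\<lambda>y. grad (quad c z) y $ i) has_derivative (\<lambda>v. c * (v \<bullet> axis i 1))) (at y)" for i
    unfolding quad_comp by (auto intro!: derivative_eq_intros)
  then have "frechet_derivative (\<lambda>y. grad (quad c z) y $ i) (at y) = (\<lambda>v. c * (v \<bullet> axis i 1))" for i
    using frechet_derivative_at by metis
  then show ?thesis
    by (simp add: hess_def vec_eq_iff mat_def inner_axis_axis)
qed

lemma quad_C2: "C2_on (quad c z) S"
proof -
  have "(quad c z) differentiable (at y)" for y
    unfolding quad_def by (auto intro!: derivative_eq_intros simp: differentiable_def)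
  moreover have "(\<lambda>y. grad (quad c z) y $ i) differentiable (at x)" for i x
    unfolding quad_comp by (auto intro!: derivative_eq_intros simp: differentiable_def)
  ultimately show ?thesis unfolding C2_on_def quad_hess by auto
qed

lemma quad_inf_lap: "inf_lap (quad c z) y = c^3 * (norm (y - z))\<^sup>2"
proof -
  define g where "g = c *\<^sub>R (y - z)"
  have in1: "(\<Sum>j\<in>UNIV. g $ i * g $ j * mat c $ i $ j) = g $ i * g $ i * c" for i
  proof -
    have "(\<Sum>j\<in>UNIV. g $ i * g $ j * mat c $ i $ j) = (\<Sum>j\<in>UNIV. if i = j then g $ i * g $ j * c else 0)"
      by (rule sum.cong) (auto simp: mat_def)
    also have "\<dots> = g $ i * g $ i * c" by (simp add: sum.delta)
    finally show ?thesis .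
  qed
  have "inf_lap (quad c z) y = (\<Sum>i\<in>UNIV. g $ i * g $ i * c)"
    unfolding inf_lap_def quad_grad quad_hess g_def[symmetric] by (simp add: in1)
  also have "\<dots> = c^3 * (\<Sum>i\<in>UNIV. (y-z)$i * (y-z)$i)"
    by (simp add: sum_distrib_left g_def power3_eq_cube mult_ac)
  also have "\<dots> = c^3 * ((y - z) \<bullet> (y - z))"
    by (simp add: inner_vec_def)
  also have "\<dots> = c^3 * (norm (y - z))\<^sup>2"
    by (simp add: power2_norm_eq_inner)
  finally show ?thesis .
qed
theorem theorem2p4:
  fixes \<Omega> :: "(real^'n) set" and u :: "real^'n \<Rightarrow> real"
  assumes "bounded \<Omega>" and "open \<Omega>"
    and "visc_sol u \<Omega>"
  shows "visc_supersol_norm u \<Omega>"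
  unfolding visc_supersol_norm_def
proof (intro allI impI)
  fix \<phi> x
  assume C2: "C2_on \<phi> \<Omega>" and lm: "local_min_at (\<lambda>y. u y - \<phi> y) \<Omega> x"
  have ucont: "continuous_on \<Omega> u" using assms(3) unfolding visc_sol_def by blast
  have supv: "\<And>\<psi> y. C2_on \<psi> \<Omega> \<Longrightarrow> local_min_at (\<lambda>y. u y - \<psi> y) \<Omega> y \<Longrightarrow>
        inf_lap \<psi> y - (norm (grad \<psi> y))\<^sup>2 \<le> 0"
    using assms(3) unfolding visc_sol_def by blast
  have sup: "inf_lap \<phi> x - (norm (grad \<phi> x))\<^sup>2 \<le> 0" using supv[OF C2 lm] .
  have xO: "x \<in> \<Omega>" using lm unfolding local_min_at_def by blast
  show "if grad \<phi> x \<noteq> 0 then inf_lap \<phi> x / (norm (grad \<phi> x))\<^sup>2 \<le> 1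
         else Inf {p \<bullet> (hess \<phi> x *v p) | p. norm p = 1} \<le> 1"
  proof (cases "grad \<phi> x = 0")
    case False
    then have "(norm (grad \<phi> x))\<^sup>2 > 0" by simp
    with sup False show ?thesis by (simp add: pos_divide_le_eq)
  next
    case True
    define H where "H = hess \<phi> x"
    define S where "S = {p \<bullet> (H *v p) | p. norm p = 1}"
    have "Inf S \<le> 1"
    proof (rule ccontr)
      assume "\<not> Inf S \<le> 1"
      then have lam1: "Inf S > 1" by simp
      define lam where "lam = Inf S"
      obtain K where K: "K > 0" "\<And>v. norm (H *v v) \<le> norm v * K"
        using bounded_linear.pos_bounded[OF matrix_vector_mul_bounded_linear[of H]] by blast
      have bdd: "bdd_below S"
        unfolding S_def bdd_below_def
      proof (intro exI[of _ "-K"] ballI)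
        fix s assume "s \<in> {p \<bullet> (H *v p) | p. norm p = 1}"
        then obtain p where p: "norm p = 1" "s = p \<bullet> (H *v p)" by blast
        have "\<bar>p \<bullet> (H *v p)\<bar> \<le> norm p * norm (H *v p)" by (rule Cauchy_Schwarz_ineq2)
        also have "\<dots> \<le> K" using K(2)[of p] p(1) by simp
        finally show "-K \<le> s" using p(2) by linarith
      qed
      have quadlb: "lam * (norm h)\<^sup>2 \<le> h \<bullet> (H *v h)" for h
      proof (cases "h = 0")
        case True then show ?thesis by simp
      next
        case False
        define p where "p = (1 / norm h) *\<^sub>R h"
        have np: "norm p = 1" using False by (simp add: p_def)
        have "lam \<le> p \<bullet> (H *v p)" unfolding lam_def
          by (rule cInf_lower[OF _ bdd]) (use np S_def in blast)
        moreover have hp: "h = norm h *\<^sub>R p" using False by (simp add: p_def)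
        have "h \<bullet> (H *v h) = (norm h)\<^sup>2 * (p \<bullet> (H *v p))"
          by (subst (1 2) hp) (simp add: matrix_vector_mult_scaleR power2_eq_square)
        ultimately show ?thesis
          by (metis mult.commute mult_right_mono zero_le_power2)
      qed
      define eps where "eps = (lam - 1) / 3"
      define mu where "mu = 1 + 2 * (lam - 1) / 3"
      define mu' where "mu' = 1 + (lam - 1) / 3"
      have lam1': "lam > 1" using lam1 lam_def by simp
      have eps0: "eps > 0" and mu_eq: "mu = lam - eps" and mu'1: "mu' > 1" and mumu: "mu' < mu"
        using lam1' by (auto simp: eps_def mu_def mu'_def field_simps)
      have gd: "(grad \<phi> has_derivative (\<lambda>v. H *v v)) (at x)"
        unfolding H_def by (rule grad_hess_deriv) (use C2 xO in \<open>auto simp: C2_on_def\<close>)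
      obtain d where d: "d > 0" "\<And>y. norm (y - x) < d \<Longrightarrow>
          norm (grad \<phi> y - grad \<phi> x - H *v (y - x)) \<le> eps * norm (y - x)"
        using gd eps0 unfolding has_derivative_at_alt by blast
      obtain e where e: "e > 0" "\<And>y. y \<in> ball x e \<inter> \<Omega> \<Longrightarrow> u x - \<phi> x \<le> u y - \<phi> y"
        using lm unfolding local_min_at_def by auto
      obtain r0 where r0: "r0 > 0" "ball x r0 \<subseteq> \<Omega>"
        using assms(2) xO open_contains_ball by blast
      define r where "r = min (min d e) r0 / 2"
      have r0': "r > 0" using d e r0 by (simp add: r_def)
      have rd: "r < d" and re: "r < e" and rr0: "r < r0" using d e r0 by (auto simp: r_def)
      have cbO: "cball x r \<subseteq> \<Omega>"
      proof -
        have "cball x r \<subseteq> ball x r0" using rr0 by auto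
        then show ?thesis using r0(2) by blast
      qed
      have lower: "u x + mu / 2 * (norm (y - x))\<^sup>2 \<le> u y" if y: "y \<in> cball x r" for y
      proof -
        define h where "h = y - x"
        have nh: "norm h \<le> r" using y by (simp add: h_def dist_norm norm_minus_commute)
        define g where "g = (\<lambda>t. \<phi> (x + t *\<^sub>R h) - mu / 2 * t\<^sup>2 * (norm h)\<^sup>2)"
        have deriv: "(g has_real_derivative (grad \<phi> (x + t *\<^sub>R h) \<bullet> h - mu * t * (norm h)\<^sup>2)) (at t)"
          if t: "0 \<le> t" "t \<le> 1" for t
        proof -
          have "t * norm h \<le> norm h" using t mult_right_mono[of t 1 "norm h"] by simp
          then have "x + t *\<^sub>R h \<in> cball x r"
            using t nh by (simp add: dist_norm)
          then have "\<phi> differentiable (at (x + t *\<^sub>R h))"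
            using cbO C2 unfolding C2_on_def by blast
          note Dphi = grad_deriv[OF this]
          have D1: "((\<lambda>t. x + t *\<^sub>R h) has_derivative (\<lambda>s. s *\<^sub>R h)) (at t)"
            by (auto intro!: derivative_eq_intros)
          have "((\<lambda>t. \<phi> (x + t *\<^sub>R h)) has_derivative (\<lambda>s. grad \<phi> (x + t *\<^sub>R h) \<bullet> (s *\<^sub>R h))) (at t)"
            using has_derivative_compose[OF D1 Dphi] by simp
          then have D2: "((\<lambda>t. \<phi> (x + t *\<^sub>R h)) has_real_derivative (grad \<phi> (x + t *\<^sub>R h) \<bullet> h)) (at t)"
            unfolding has_field_derivative_def
          proof -
            assume a: "((\<lambda>t. \<phi> (x + t *\<^sub>R h)) has_derivative (\<lambda>s. grad \<phi> (x + t *\<^sub>R h) \<bullet> (s *\<^sub>R h))) (at t)"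
            have "(\<lambda>s. grad \<phi> (x + t *\<^sub>R h) \<bullet> (s *\<^sub>R h)) = (*) (grad \<phi> (x + t *\<^sub>R h) \<bullet> h)"
              by (rule ext) (simp add: mult.commute)
            with a show "((\<lambda>t. \<phi> (x + t *\<^sub>R h)) has_derivative (*) (grad \<phi> (x + t *\<^sub>R h) \<bullet> h)) (at t)" by simp
          qed
          have D3: "((\<lambda>t. mu / 2 * t\<^sup>2 * (norm h)\<^sup>2) has_real_derivative mu * t * (norm h)\<^sup>2) (at t)"
            by (auto intro!: derivative_eq_intros)
          show ?thesis unfolding g_def by (rule DERIV_diff[OF D2 D3])
        qed
        have cont: "continuous_on {0..1} g"
        proof (rule continuous_at_imp_continuous_on, rule ballI)
          fix t :: real assume "t \<in> {0..1}"
          then show "isCont g t" using deriv[of t] DERIV_isCont by auto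
        qed
        have "g 0 \<le> g 1"
        proof (rule DERIV_nonneg_imp_increasing_open[of 0 1 g, OF _ _ cont])
          fix t :: real assume t: "0 < t" "t < 1"
          define v where "v = t *\<^sub>R h"
          have nv: "norm v = t * norm h" using t by (simp add: v_def)
          have "t * norm h \<le> norm h" using t mult_right_mono[of t 1 "norm h"] by simp
          then have "norm v < d" using nv nh rd by linarith
          then have err: "norm (grad \<phi> (x + v) - H *v v) \<le> eps * (t * norm h)"
            using d(2)[of "x + v"] True nv by simp
          have "- ((grad \<phi> (x + v) - H *v v) \<bullet> h) \<le> eps * t * (norm h)\<^sup>2"
          proof -
            have "- ((grad \<phi> (x + v) - H *v v) \<bullet> h) \<le> norm (grad \<phi> (x + v) - H *v v) * norm h"
              using Cauchy_Schwarz_ineq2[of "grad \<phi> (x + v) - H *v v" h] by arith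
            also have "\<dots> \<le> eps * (t * norm h) * norm h"
              using err by (simp add: mult_right_mono)
            finally show ?thesis by (simp add: power2_eq_square mult_ac)
          qed
          moreover have "(H *v v) \<bullet> h = t * (h \<bullet> (H *v h))"
            by (simp add: v_def matrix_vector_mult_scaleR inner_commute)
          moreover have "t * (lam * (norm h)\<^sup>2) \<le> t * (h \<bullet> (H *v h))"
            using quadlb[of h] t by (simp add: mult_left_mono)
          ultimately have "grad \<phi> (x + v) \<bullet> h - mu * t * (norm h)\<^sup>2 \<ge> 0"
            unfolding mu_eq by (simp add: inner_diff_left algebra_simps; linarith)
          then show "\<exists>y. (g has_real_derivative y) (at t) \<and> 0 \<le> y"
            using deriv[of t] t v_def by auto
        qed auto
        then have "\<phi> x + mu / 2 * (norm h)\<^sup>2 \<le> \<phi> y" by (simp add: g_def h_def)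
        moreover have "u x - \<phi> x \<le> u y - \<phi> y"
          using e(2)[of y] y re cbO by (auto simp: dist_norm)
        ultimately show ?thesis by (simp add: h_def)
      qed
      obtain a :: "real^'n" where a: "norm a = 1" using norm_axis_1 by blast
      define d' where "d' = min (r / 2) ((mu - mu') * r / (4 * mu'))"
      have d'0: "d' > 0" using r0' mumu mu'1 by (simp add: d'_def)
      have d'r: "d' \<le> r" using r0' by (simp add: d'_def)
      have "mu' * d' \<le> (mu - mu') * r / 4"
      proof -
        have "d' \<le> (mu - mu') * r / (4 * mu')" by (simp add: d'_def)
        then have "mu' * d' \<le> mu' * ((mu - mu') * r / (4 * mu'))"
          using mu'1 by (intro mult_left_mono) auto
        also have "\<dots> = (mu - mu') * r / 4" using mu'1 by (simp add: field_simps)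
        finally show ?thesis .
      qed
      then have key: "mu' * (2 * r * d') < (mu - mu') * r\<^sup>2"
      proof -
        assume k: "mu' * d' \<le> (mu - mu') * r / 4"
        have "mu' * (2 * r * d') = 2 * r * (mu' * d')" by (simp add: algebra_simps)
        also have "\<dots> \<le> 2 * r * ((mu - mu') * r / 4)" using k r0' by (intro mult_left_mono) auto
        also have "\<dots> = (mu - mu') * r\<^sup>2 / 2" by (simp add: power2_eq_square field_simps)
        also have "\<dots> < (mu - mu') * r\<^sup>2" using mumu r0' by simp
        finally show ?thesis .
      qed
      define z where "z = x + d' *\<^sub>R a"
      have nxz: "norm (x - z) = d'" using a d'0 by (simp add: z_def)
      define w where "w = (\<lambda>y. u y - quad mu' z y)"
      have quad_eq: "quad mu' z y = mu' / 2 * (norm (y - z))\<^sup>2" for y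
        by (simp add: quad_def power2_norm_eq_inner)
      have wc: "continuous_on (cball x r) w"
        unfolding w_def quad_def
        by (intro continuous_intros continuous_on_subset[OF ucont cbO])
      obtain ys where ys: "ys \<in> cball x r" "\<And>y. y \<in> cball x r \<Longrightarrow> w ys \<le> w y"
        using continuous_attains_inf[OF compact_cball _ wc] r0' by fastforce
      have xin: "x \<in> cball x r" using r0' by simp
      have wx: "w x = u x - mu' / 2 * d'\<^sup>2" by (simp add: w_def quad_eq nxz)
      have ysz: "ys \<noteq> z"
      proof
        assume "ys = z"
        have "norm (z - x) = d'" using a d'0 by (simp add: z_def)
        then have "u x + mu / 2 * d'\<^sup>2 \<le> u ys" using lower[OF ys(1)] \<open>ys = z\<close> by simp
        moreover have "w ys \<le> w x" using ys(2)[OF xin] .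
        moreover have "w ys = u ys" using \<open>ys = z\<close> by (simp add: w_def quad_def)
        moreover have "mu * d'\<^sup>2 > 0" "mu' * d'\<^sup>2 > 0" using d'0 mumu mu'1 by simp_all
        ultimately show False using wx by linarith
      qed
      have ysb: "ys \<in> ball x r"
      proof (rule ccontr)
        assume "ys \<notin> ball x r"
        then have nr: "norm (ys - x) = r" using ys(1) by (simp add: dist_norm norm_minus_commute)
        have "norm (ys - z) \<le> r + d'"
        proof -
          have "ys - z = (ys - x) - d' *\<^sub>R a" by (simp add: z_def)
          then have "norm (ys - z) \<le> norm (ys - x) + norm (d' *\<^sub>R a)" by (metis norm_triangle_ineq4)
          then show ?thesis using nr a d'0 by simp
        qed
        then have n2: "(norm (ys - z))\<^sup>2 \<le> (r + d')\<^sup>2" by (simp add: power_mono)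
        have "w ys = u ys - mu' / 2 * (norm (ys - z))\<^sup>2" by (simp add: w_def quad_eq)
        have "u x + mu / 2 * r\<^sup>2 \<le> u ys" using lower[OF ys(1)] nr by simp
        moreover have "w ys \<le> w x" using ys(2)[OF xin] .
        ultimately have F1: "mu / 2 * r\<^sup>2 - mu' / 2 * (norm (ys - z))\<^sup>2 \<le> - mu' / 2 * d'\<^sup>2"
          using wx \<open>w ys = u ys - mu' / 2 * (norm (ys - z))\<^sup>2\<close> by linarith
        have F2: "mu' / 2 * (norm (ys - z))\<^sup>2 \<le> mu' / 2 * (r + d')\<^sup>2"
          using n2 mu'1 by simp
        have F3: "mu' / 2 * (r + d')\<^sup>2 = mu' / 2 * r\<^sup>2 + mu' * (2 * r * d') / 2 + mu' / 2 * d'\<^sup>2"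
          by (simp add: power2_eq_square algebra_simps)
        have F4: "mu / 2 * r\<^sup>2 - mu' / 2 * r\<^sup>2 = (mu - mu') * r\<^sup>2 / 2"
          by (simp add: algebra_simps)
        show False using F1 F2 F3 F4 key by linarith
      qed
      have lmin: "local_min_at (\<lambda>y. u y - quad mu' z y) \<Omega> ys"
        unfolding local_min_at_def
      proof (intro conjI exI[of _ "r - dist x ys"])
        show "ys \<in> \<Omega>" using ys(1) cbO by blast
        show "r - dist x ys > 0" using ysb by simp
        show "\<forall>y\<in>ball ys (r - dist x ys) \<inter> \<Omega>. u ys - quad mu' z ys \<le> u y - quad mu' z y"
        proof
          fix y assume "y \<in> ball ys (r - dist x ys) \<inter> \<Omega>"
          then have "dist ys y < r - dist x ys" by simp
          then have "y \<in> cball x r" using dist_triangle[of x y ys] by simp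
          then show "u ys - quad mu' z ys \<le> u y - quad mu' z y" using ys(2) by (simp add: w_def)
        qed
      qed
      have "inf_lap (quad mu' z) ys - (norm (grad (quad mu' z) ys))\<^sup>2 \<le> 0"
        using supv[OF quad_C2 lmin] .
      then have "mu' ^ 3 * (norm (ys - z))\<^sup>2 - mu'\<^sup>2 * (norm (ys - z))\<^sup>2 \<le> 0"
        using mu'1 by (simp add: quad_inf_lap quad_grad power_mult_distrib)
      then have A: "(mu' ^ 3 - mu'\<^sup>2) * (norm (ys - z))\<^sup>2 \<le> 0"
        by (simp add: algebra_simps)
      have "(norm (ys - z))\<^sup>2 > 0" using ysz by simp
      with A have B: "mu' ^ 3 - mu'\<^sup>2 \<le> 0"
        by (simp add: mult_le_0_iff)
      have "mu'\<^sup>2 > 0" using mu'1 by simp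
      then have "1 * mu'\<^sup>2 < mu' * mu'\<^sup>2" using mu'1 by (intro mult_strict_right_mono) auto
      moreover have "mu' ^ 3 = mu' * mu'\<^sup>2" by (simp add: power3_eq_cube power2_eq_square)
      ultimately show False using B by simp
    qed
    with True show ?thesis by (simp add: S_def H_def)
  qed
qed

end
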